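(* Let $n>3$. There exist functions $\rho,p:[0,\infty[\to]0,\infty[$ with the following properties. 1. Both $\rho$ and $p$ are $C^\infty$ functions of $r^2$. 2. $\rho'(r)<0$ for $r>0$, and $\rho''(0)<0$. 3. $\rho(r)=r^{-2n/(n-1)}$ for $r>1$. 4. With $m(r)=4\pi\int_0^r s^2\rho(s)\,ds$, one has $p(r)=\int_r^\infty s^{-2}m(s)\rho(s)\,ds$. In particular $p'(r)=-\rho(r)m(r)/r^2$, i.e. $(\rho,p)$ is a static spherically symmetric solution of the Euler–Poisson system. 5. There is a smooth function $F$ on $]0,\rho(0)[$ with $F'>0$ and $p(r)=F(\rho(r))$ for all $r>0$. 6. For $0<\rho<\rho(1)$, $$F(\rho)=\frac{4\pi(n-1)^2}{2(n+1)(n-3)}\,\rho^{(n+1)/n},$$ i.e. the equation of state is polytropic of index $n$ at low densities. Moreover, $m(r)=4\pi\frac{n-1}{n-3}r^{(n-3)/(n-1)}$ for $r>1$. Hence this steady state has unbounded support ($\rho>0$ everywhere) and infinite total mass. *)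

theory Defs
  imports "HOL-Analysis.Analysis"
begin

definition smooth_on :: "real set \<Rightarrow> (real \<Rightarrow> real) \<Rightarrow> bool" where
  "smooth_on S f \<longleftrightarrow> (\<forall>k. \<forall>x\<in>S. ((deriv ^^ k) f) differentiable (at x))"

definition mass :: "(real \<Rightarrow> real) \<Rightarrow> real \<Rightarrow> real" where
  "mass rho r = 4 * pi * integral {0..r} (\<lambda>s. s^2 * rho s)"

end

theory Submission
  imports Defs "HOL-Computational_Algebra.Polynomial"
begin


fun Ck :: "nat \<Rightarrow> real set \<Rightarrow> (real \<Rightarrow> real) \<Rightarrow> bool" where
  "Ck 0 S f = True"
| "Ck (Suc k) S f = ((\<forall>x\<in>S. f differentiable (at x)) \<and> Ck k S (deriv f))"

lemma Ck_smooth: "(\<And>k. Ck k S f) \<Longrightarrow> smooth_on S f"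
proof -
  have "Ck (Suc j) S f \<Longrightarrow> x \<in> S \<Longrightarrow> ((deriv ^^ j) f) differentiable (at x)" for j x
  proof (induction j arbitrary: f)
    case 0 then show ?case by simp
  next
    case (Suc j)
    have "Ck (Suc j) S (deriv f)" using Suc.prems by simp
    from Suc.IH[OF this Suc.prems(2)] show ?case by (simp add: funpow_Suc_right del: funpow.simps)
  qed
  then show "(\<And>k. Ck k S f) \<Longrightarrow> smooth_on S f" unfolding smooth_on_def by blast
qed

lemma Ck_mono: "Ck (Suc k) S f \<Longrightarrow> Ck k S f"
  by (induction k arbitrary: f) auto

lemma rdiff_fdiff: "(f::real\<Rightarrow>real) differentiable (at x) \<longleftrightarrow> f field_differentiable (at x)"
  by (metis DERIV_deriv_iff_field_differentiable DERIV_deriv_iff_real_differentiable)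

lemma Ck_subset: "Ck k S f \<Longrightarrow> T \<subseteq> S \<Longrightarrow> Ck k T f"
  by (induction k arbitrary: f) auto

lemma Ck_cong:
  assumes "open S" "\<And>x. x \<in> S \<Longrightarrow> f x = g x" "Ck k S f"
  shows "Ck k S g"
  using assms(2,3)
proof (induction k arbitrary: f g)
  case 0 then show ?case by simp
next
  case (Suc k)
  have ev: "eventually (\<lambda>y. f y = g y) (nhds x)" if "x \<in> S" for x
    using assms(1) that Suc.prems(1) eventually_nhds by blast
  have "g differentiable (at x)" if "x \<in> S" for x
  proof -
    from Suc.prems(2) that obtain D where "(f has_field_derivative D) (at x)"
      by (auto simp: real_differentiable_def)
    then have "(g has_field_derivative D) (at x)"
      using DERIV_cong_ev[OF refl ev[OF that] refl] by simp
    then show ?thesis by (auto simp: real_differentiable_def)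
  qed
  moreover have "Ck k S (deriv g)"
    by (rule Suc.IH[of "deriv f"]) (use Suc.prems deriv_cong_ev[OF ev] in auto)
  ultimately show ?case by simp
qed

lemma Ck_cong': "Ck k S f \<Longrightarrow> open S \<Longrightarrow> (\<And>x. x \<in> S \<Longrightarrow> f x = g x) \<Longrightarrow> Ck k S g"
  using Ck_cong by blast

lemma Ck_const: "Ck k S (\<lambda>x. c)"
proof (induction k arbitrary: c)
  case (Suc k)
  have "deriv (\<lambda>x. c) = (\<lambda>x. 0)" by (rule ext) simp
  then show ?case using Suc by simp
qed simp

lemma Ck_id: "Ck k S (\<lambda>x. x)"
proof (cases k)
  case (Suc j)
  have "deriv (\<lambda>x. x) = (\<lambda>x. 1)" by (rule ext) simp
  then show ?thesis using Suc Ck_const by simp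
qed simp

lemma Ck_add: "open S \<Longrightarrow> Ck k S f \<Longrightarrow> Ck k S g \<Longrightarrow> Ck k S (\<lambda>x. f x + g x)"
proof (induction k arbitrary: f g)
  case (Suc k)
  have d: "deriv (\<lambda>x. f x + g x) x = deriv f x + deriv g x" if "x \<in> S" for x
    using Suc.prems that by (intro deriv_add) (auto simp: rdiff_fdiff)
  have "Ck k S (\<lambda>x. deriv f x + deriv g x)" using Suc by simp
  then have "Ck k S (deriv (\<lambda>x. f x + g x))" by (rule Ck_cong') (use d Suc.prems(1) in auto)
  then show ?case using Suc.prems by auto
qed simp

lemma Ck_mult: "open S \<Longrightarrow> Ck k S f \<Longrightarrow> Ck k S g \<Longrightarrow> Ck k S (\<lambda>x. f x * g x)"
proof (induction k arbitrary: f g)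
  case (Suc k)
  have d: "deriv (\<lambda>x. f x * g x) x = f x * deriv g x + deriv f x * g x" if "x \<in> S" for x
    using Suc.prems that by (intro deriv_mult) (auto simp: rdiff_fdiff)
  have "Ck k S f" "Ck k S g" using Suc.prems Ck_mono by blast+
  then have "Ck k S (\<lambda>x. f x * deriv g x + deriv f x * g x)" using Suc
    by (intro Ck_add) auto
  then have "Ck k S (deriv (\<lambda>x. f x * g x))" by (rule Ck_cong') (use d Suc.prems(1) in auto)
  then show ?case using Suc.prems by auto
qed simp

lemma Ck_cmult: "open S \<Longrightarrow> Ck k S f \<Longrightarrow> Ck k S (\<lambda>x. c * f x)"
  using Ck_mult[OF _ Ck_const] by blast

lemma Ck_minus: "open S \<Longrightarrow> Ck k S f \<Longrightarrow> Ck k S g \<Longrightarrow> Ck k S (\<lambda>x. f x - g x)"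
  using Ck_add[of S k f "\<lambda>x. (-1) * g x"] Ck_cmult[of S k g "-1"] by simp

lemma Ck_comp:
  assumes "open S" "open T"
  shows "Ck k T f \<Longrightarrow> Ck k S g \<Longrightarrow> g ` S \<subseteq> T \<Longrightarrow> Ck k S (\<lambda>x. f (g x))"
proof (induction k arbitrary: f g)
  case (Suc k)
  have diff: "(\<lambda>x. f (g x)) differentiable (at x)" if "x \<in> S" for x
  proof -
    have "f differentiable (at (g x))" using Suc.prems that by auto
    moreover have "g differentiable (at x)" using Suc.prems that by auto
    ultimately show ?thesis
      by (metis DERIV_chain2 real_differentiable_def)
  qed
  have d: "deriv (\<lambda>x. f (g x)) x = deriv f (g x) * deriv g x" if "x \<in> S" for x
  proof -
    have "f differentiable (at (g x))" "g differentiable (at x)" using Suc.prems that by auto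
    then show ?thesis
      by (metis DERIV_chain2 DERIV_deriv_iff_real_differentiable DERIV_imp_deriv)
  qed
  have "Ck k S g" using Suc.prems Ck_mono by blast
  moreover have "Ck k T (deriv f)" using Suc.prems(1) by simp
  ultimately have "Ck k S (\<lambda>x. deriv f (g x))" using Suc.IH Suc.prems(3) by blast
  then have "Ck k S (\<lambda>x. deriv f (g x) * deriv g x)" using Suc assms by (intro Ck_mult) auto
  then have "Ck k S (deriv (\<lambda>x. f (g x)))" by (rule Ck_cong') (use d assms(1) in auto)
  then show ?case using diff by simp
qed simp

lemma Ck_inverse: "Ck k (-{0}) (\<lambda>x. inverse x)"
proof (induction k)
  case (Suc k)
  have d: "deriv (\<lambda>x. inverse x) x = - inverse x * inverse x" if "x \<in> -{0}" for x :: real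
    using that by (intro DERIV_imp_deriv) (auto intro!: derivative_eq_intros simp: power2_eq_square field_simps)
  have "Ck k (-{0}) (\<lambda>x. - inverse x * inverse x)"
    using Ck_mult[OF _ Ck_cmult[OF _ Suc] Suc, of "-1"] by auto
  then have "Ck k (-{0}) (deriv (\<lambda>x. inverse x))" by (rule Ck_cong') (auto simp: d power2_eq_square field_simps)
  moreover have "(\<lambda>x. inverse x) differentiable (at x)" if "x \<in> -{0}" for x :: real
    using that by (auto intro!: derivative_eq_intros simp: real_differentiable_def)
  ultimately show ?case by simp
qed simp

lemma Ck_inv: "open S \<Longrightarrow> Ck k S f \<Longrightarrow> (\<And>x. x \<in> S \<Longrightarrow> f x \<noteq> 0) \<Longrightarrow> Ck k S (\<lambda>x. inverse (f x))"
  by (rule Ck_comp[OF _ _ Ck_inverse]) auto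

lemma Ck_powr: "Ck k {0<..} (\<lambda>x. x powr c)"
proof (induction k arbitrary: c)
  case (Suc k)
  have d: "deriv (\<lambda>x. x powr c) x = c * x powr (c - 1)" if "x \<in> {0<..}" for x :: real
    using that by (intro DERIV_imp_deriv) (auto intro!: derivative_eq_intros)
  have "Ck k {0<..} (\<lambda>x. c * x powr (c - 1))" using Ck_cmult Suc by auto
  then have "Ck k {0<..} (deriv (\<lambda>x. x powr c))" by (rule Ck_cong') (auto simp: d)
  moreover have "(\<lambda>x. x powr c) differentiable (at x)" if "x \<in> {0<..}" for x :: real
    using that by (auto intro!: derivative_eq_intros simp: real_differentiable_def)
  ultimately show ?case by simp
qed simp

lemma Ck_antideriv:
  assumes "open S" "\<And>x. x \<in> S \<Longrightarrow> (F has_real_derivative f x) (at x)" "Ck k S f"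
  shows "Ck (Suc k) S F"
proof -
  have "Ck k S (deriv F)" by (rule Ck_cong[OF assms(1) _ assms(3)]) (use assms(2) DERIV_imp_deriv in metis)
  then show ?thesis using assms(2) by (auto simp: real_differentiable_def)
qed



definition E :: "real poly \<Rightarrow> real \<Rightarrow> real" where
  "E q x = (if x > 0 then poly q (1/x) * exp (-1/x) else 0)"

definition Dp :: "real poly \<Rightarrow> real poly" where
  "Dp q = [:0,0,1:] * (q - pderiv q)"

lemma poly_exp_lim: "((\<lambda>y. poly q y * y / exp y) \<longlongrightarrow> (0::real)) at_top"
proof -
  have eq: "poly q y * y / exp y = (\<Sum>i\<le>degree q. coeff q i * (y ^ Suc i / exp y))" for y
  proof -
    have "poly q y * y / exp y = (\<Sum>i\<le>degree q. coeff q i * y ^ i * y / exp y)"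
      by (simp add: poly_altdef sum_distrib_right sum_divide_distrib)
    also have "\<dots> = (\<Sum>i\<le>degree q. coeff q i * (y ^ Suc i / exp (y::real)))"
      by (simp add: mult_ac)
    finally show ?thesis .
  qed
  have "((\<lambda>y. \<Sum>i\<le>degree q. coeff q i * (y ^ Suc i / exp y)) \<longlongrightarrow> 0) at_top"
    by (intro tendsto_null_sum tendsto_mult_right_zero tendsto_power_div_exp_0)
  then show ?thesis by (simp add: eq)
qed

lemma E_deriv: "(E q has_real_derivative E (Dp q) x) (at x)"
proof (cases "x > 0")
  case True
  have d1: "((\<lambda>x. poly q (1/x)) has_real_derivative poly (pderiv q) (1/x) * (-1/x^2)) (at x)"
    by (rule DERIV_chain2[OF poly_DERIV]) (use True in \<open>auto intro!: derivative_eq_intros simp: power2_eq_square\<close>)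
  have d3: "((\<lambda>x. exp (-1/x)) has_real_derivative exp(-1/x) * (1/x^2)) (at x)"
    using True by (auto intro!: derivative_eq_intros simp: power2_eq_square field_simps)
  have d2: "((\<lambda>x. poly q (1/x) * exp (-1/x)) has_real_derivative
      poly (pderiv q) (1/x) * (-1/x^2) * exp (-1/x) + exp (-1/x) * (1/x^2) * poly q (1/x)) (at x)"
    by (rule DERIV_mult[OF d1 d3])
  have eq: "poly (pderiv q) (1/x) * (-1/x^2) * exp (-1/x) + exp (-1/x) * (1/x^2) * poly q (1/x)
        = E (Dp q) x"
    using True by (simp add: E_def Dp_def algebra_simps power2_eq_square)
  have "((\<lambda>x. poly q (1/x) * exp (-1/x)) has_real_derivative E (Dp q) x) (at x)" using d2 by (simp only: eq)
  then show ?thesis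
    by (rule has_field_derivative_transform_within_open[where S="{0<..}"]) (use True in \<open>auto simp: E_def\<close>)
next
  case False
  show ?thesis
  proof (cases "x < 0")
    case True
    have "((\<lambda>x. 0) has_real_derivative 0) (at x)" by simp
    then have "((\<lambda>x. 0) has_real_derivative E (Dp q) x) (at x)" using True by (simp add: E_def)
    then show ?thesis
      by (rule has_field_derivative_transform_within_open[where S="{..<0}"]) (use True in \<open>auto simp: E_def\<close>)
  next
    case False
    with \<open>\<not> x > 0\<close> have x0: "x = 0" by simp
    have "((\<lambda>y. (E q y - E q 0) / (y - 0)) \<longlongrightarrow> 0) (at 0)"
      unfolding filterlim_at_split
    proof
      have "eventually (\<lambda>y. 0 = (E q y - E q 0) / (y - 0)) (at_left (0::real))"
        by (auto simp: E_def eventually_at_left_real[of "-1" 0] intro: eventually_mono[OF eventually_at_left_real[of "-1" 0]])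
      then show "((\<lambda>y. (E q y - E q 0) / (y - 0)) \<longlongrightarrow> 0) (at_left 0)"
        by (rule Lim_transform_eventually[OF tendsto_const])
    next
      have "((\<lambda>y. poly q y * y / exp y) \<longlongrightarrow> 0) at_top" by (rule poly_exp_lim)
      moreover have "eventually (\<lambda>y. poly q y * y / exp y = (E q (inverse y) - E q 0) / (inverse y - 0)) at_top"
        using eventually_gt_at_top[of 0]
        by eventually_elim (simp add: E_def exp_minus field_simps)
      ultimately have "((\<lambda>y. (E q (inverse y) - E q 0) / (inverse y - 0)) \<longlongrightarrow> 0) at_top"
        by (rule Lim_transform_eventually)
      then show "((\<lambda>y. (E q y - E q 0) / (y - 0)) \<longlongrightarrow> 0) (at_right 0)"
        unfolding filterlim_at_right_to_top by simp
    qed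
    then have "(E q has_real_derivative 0) (at 0)"
      unfolding has_field_derivative_iff by simp
    then show ?thesis using x0 by (simp add: E_def)
  qed
qed

lemma E_Ck: "Ck k UNIV (E q)"
proof (induction k arbitrary: q)
  case (Suc k)
  have "deriv (E q) = E (Dp q)" using E_deriv DERIV_imp_deriv by blast
  then show ?case using Suc E_deriv by (auto simp: real_differentiable_def)
qed simp

lemma E_nonneg: "poly q ` {0<..} \<subseteq> {0..} \<Longrightarrow> E q x \<ge> 0"
  by (force simp: E_def image_subset_iff)



definition f0 :: "real \<Rightarrow> real" where "f0 = E 1"
definition f1 :: "real \<Rightarrow> real" where "f1 = E (Dp 1)"

lemma f0_eq: "f0 x = (if x > 0 then exp (-1/x) else 0)"
  by (simp add: f0_def E_def)
lemma f1_eq: "f1 x = (if x > 0 then (1/x)^2 * exp (-1/x) else 0)"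
  by (simp add: f1_def E_def Dp_def power2_eq_square)
lemma f0_deriv: "(f0 has_real_derivative f1 x) (at x)"
  unfolding f0_def f1_def by (rule E_deriv)
lemma f0_Ck: "Ck k UNIV f0"
  unfolding f0_def by (rule E_Ck)
lemma f0_nonneg: "f0 x \<ge> 0" by (simp add: f0_eq)
lemma f1_nonneg: "f1 x \<ge> 0" by (simp add: f1_eq)
lemma f0_pos: "x > 0 \<Longrightarrow> f0 x > 0" by (simp add: f0_eq)

definition den :: "real \<Rightarrow> real" where "den x = f0 x + f0 (1 - x)"
lemma den_pos: "den x > 0"
  unfolding den_def using f0_pos[of x] f0_pos[of "1-x"] f0_nonneg[of x] f0_nonneg[of "1-x"]
  by (cases "x > 0") auto

definition th :: "real \<Rightarrow> real" where "th x = f0 x / den x"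
definition th1 :: "real \<Rightarrow> real" where
  "th1 x = (f1 x * f0 (1 - x) + f0 x * f1 (1 - x)) / (den x)^2"

lemma th_deriv: "(th has_real_derivative th1 x) (at x)"
proof -
  have d: "(den has_real_derivative f1 x - f1 (1 - x)) (at x)"
    unfolding den_def
    by (rule derivative_eq_intros f0_deriv DERIV_chain2[OF f0_deriv] refl)+ simp
  have "((\<lambda>x. f0 x / den x) has_real_derivative
      (f1 x * den x - f0 x * (f1 x - f1 (1 - x))) / (den x * den x)) (at x)"
    by (rule DERIV_divide[OF f0_deriv d]) (use den_pos[of x] in simp)
  moreover have "(f1 x * den x - f0 x * (f1 x - f1 (1 - x))) / (den x * den x) = th1 x"
    unfolding th1_def den_def by (simp add: power2_eq_square algebra_simps)
  ultimately show ?thesis unfolding th_def[abs_def] by simp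
qed

lemma th1_nonneg: "th1 x \<ge> 0"
  unfolding th1_def using f0_nonneg f1_nonneg by (intro divide_nonneg_nonneg add_nonneg_nonneg mult_nonneg_nonneg) auto

lemma th_0: "x \<le> 0 \<Longrightarrow> th x = 0" by (simp add: th_def f0_eq)
lemma th_1: "x \<ge> 1 \<Longrightarrow> th x = 1"
  using den_pos[of x] by (simp add: th_def den_def f0_eq)
lemma th_ge0: "th x \<ge> 0" using den_pos[of x] f0_nonneg[of x] by (simp add: th_def)
lemma th_le1: "th x \<le> 1"
  using den_pos[of x] f0_nonneg[of "1-x"] by (simp add: th_def den_def)

lemma th_Ck: "Ck k UNIV th"
proof -
  have a: "Ck k UNIV (\<lambda>x. f0 (1 - x))"
    by (rule Ck_comp[OF _ _ f0_Ck]) (auto intro: Ck_minus Ck_const Ck_id)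
  have nz: "f0 x + f0 (1-x) \<noteq> 0" for x using den_pos[of x] by (metis den_def less_irrefl)
  have "Ck k UNIV (\<lambda>x. inverse (den x))"
    unfolding den_def by (rule Ck_inv) (use nz in \<open>auto intro!: Ck_add a f0_Ck\<close>)
  then have "Ck k UNIV (\<lambda>x. f0 x * inverse (den x))" by (intro Ck_mult f0_Ck) auto
  then show ?thesis by (simp add: th_def[abs_def] divide_inverse)
qed

lemma global_antideriv:
  fixes f :: "real \<Rightarrow> real"
  assumes "continuous_on UNIV f"
  shows "\<exists>F. \<forall>x. (F has_real_derivative f x) (at x)"
proof -
  define F where "F x = integral {0..x} f - integral {x..0} f" for x
  have "(F has_real_derivative f x) (at x)" for x
  proof -
    define a where "a = - \<bar>x\<bar> - 1"
    define b where "b = \<bar>x\<bar> + 1"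
    have ab: "a < x" "x < b" "a < 0" "0 < b" unfolding a_def b_def by auto
    have int: "f integrable_on {a..b}"
      by (rule integrable_continuous_real) (use assms continuous_on_subset in blast)
    have eqF: "F t = integral {a..t} f - integral {a..0} f" if "t \<in> {a<..<b}" for t
    proof (cases "t \<ge> 0")
      case True
      have "integral {a..0} f + integral {0..t} f = integral {a..t} f"
        by (rule Henstock_Kurzweil_Integration.integral_combine) (use True that ab in \<open>auto intro: integrable_on_subinterval[OF int]\<close>)
      moreover have "integral {t..0} f = 0"
        using True by (cases "t = 0") auto
      ultimately show ?thesis unfolding F_def by simp
    next
      case False
      have "integral {a..t} f + integral {t..0} f = integral {a..0} f"
        by (rule Henstock_Kurzweil_Integration.integral_combine) (use False that ab in \<open>auto intro: integrable_on_subinterval[OF int]\<close>)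
      moreover have "integral {0..t} f = 0"
        using False by simp
      ultimately show ?thesis unfolding F_def by simp
    qed
    have "((\<lambda>t. integral {a..t} f) has_real_derivative f x) (at x within {a..b})"
      by (rule integral_has_real_derivative) (use assms continuous_on_subset ab in auto)
    then have "((\<lambda>t. integral {a..t} f) has_real_derivative f x) (at x)"
      using at_within_Icc_at[OF ab(1,2)] by simp
    then have "((\<lambda>t. integral {a..t} f - integral {a..0} f) has_real_derivative f x) (at x)"
      by (rule derivative_eq_intros) auto
    then show ?thesis
      by (rule has_field_derivative_transform_within_open[where S="{a<..<b}"]) (use ab eqF in auto)
  qed
  then show ?thesis by blast
qed

lemma Ck_cont: "Ck (Suc k) S f \<Longrightarrow> continuous_on S f"
  by (auto intro!: continuous_at_imp_continuous_on differentiable_imp_continuous_within)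



lemma mvt_lower:
  assumes "a \<le> b" "\<And>x. (F has_real_derivative F' x) (at x)" "\<And>x. a \<le> x \<Longrightarrow> x \<le> b \<Longrightarrow> L \<le> F' x"
  shows "(b - a) * L \<le> F b - F a"
proof (cases "a = b")
  case False
  then have "a < b" using assms by simp
  from MVT2[OF this assms(2)] obtain z where z: "a < z" "z < b" "F b - F a = (b - a) * F' z" by blast
  then show ?thesis using assms(3)[of z] \<open>a < b\<close> by (simp add: mult_left_mono)
qed simp

lemma mvt_upper:
  assumes "a \<le> b" "\<And>x. (F has_real_derivative F' x) (at x)" "\<And>x. a \<le> x \<Longrightarrow> x \<le> b \<Longrightarrow> F' x \<le> U"
  shows "F b - F a \<le> (b - a) * U"
proof (cases "a = b")
  case False
  then have "a < b" using assms by simp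
  from MVT2[OF this assms(2)] obtain z where z: "a < z" "z < b" "F b - F a = (b - a) * F' z" by blast
  then show ?thesis using assms(3)[of z] \<open>a < b\<close> by (simp add: mult_left_mono)
qed simp

lemma mvt_lower':
  assumes "a \<le> b" "\<And>x. a \<le> x \<Longrightarrow> x \<le> b \<Longrightarrow> (F has_real_derivative F' x) (at x)" "\<And>x. a \<le> x \<Longrightarrow> x \<le> b \<Longrightarrow> L \<le> F' x"
  shows "(b - a) * L \<le> F b - F a"
proof (cases "a = b")
  case False
  then have "a < b" using assms by simp
  from MVT2[OF this assms(2)] obtain z where z: "a < z" "z < b" "F b - F a = (b - a) * F' z" by blast
  then show ?thesis using assms(3)[of z] \<open>a < b\<close> by (simp add: mult_left_mono)
qed simp

lemma mvt_upper':
  assumes "a \<le> b" "\<And>x. a \<le> x \<Longrightarrow> x \<le> b \<Longrightarrow> (F has_real_derivative F' x) (at x)" "\<And>x. a \<le> x \<Longrightarrow> x \<le> b \<Longrightarrow> F' x \<le> U"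
  shows "F b - F a \<le> (b - a) * U"
proof (cases "a = b")
  case False
  then have "a < b" using assms by simp
  from MVT2[OF this assms(2)] obtain z where z: "a < z" "z < b" "F b - F a = (b - a) * F' z" by blast
  then show ?thesis using assms(3)[of z] \<open>a < b\<close> by (simp add: mult_left_mono)
qed simp

definition w1 :: "real \<Rightarrow> real" where "w1 u = th (4*u+1) / 2 + th (2*u-1) / 2"
definition w2 :: "real \<Rightarrow> real" where "w2 u = 2 * th1 (4*u+1) + th1 (2*u-1)"

lemma w1_deriv: "(w1 has_real_derivative w2 u) (at u)"
proof -
  have a: "((\<lambda>u. th (4*u+1)) has_real_derivative th1 (4*u+1) * 4) (at u)"
    by (rule DERIV_chain2[OF th_deriv]) (auto intro!: derivative_eq_intros)
  have b: "((\<lambda>u. th (2*u-1)) has_real_derivative th1 (2*u-1) * 2) (at u)"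
    by (rule DERIV_chain2[OF th_deriv]) (auto intro!: derivative_eq_intros)
  have "((\<lambda>u. th (4*u+1) / 2 + th (2*u-1) / 2) has_real_derivative
        th1 (4*u+1) * 4 / 2 + th1 (2*u-1) * 2 / 2) (at u)"
    by (intro DERIV_add DERIV_cdivide a b)
  then show ?thesis unfolding w1_def[abs_def] w2_def by simp
qed

lemma w1_Ck: "Ck k UNIV w1"
proof -
  have "Ck k UNIV (\<lambda>u. th (4*u+1))" "Ck k UNIV (\<lambda>u. th (2*u-1))"
    by (rule Ck_comp[OF _ _ th_Ck]; auto intro!: Ck_add Ck_minus Ck_cmult Ck_const Ck_id)+
  then have "Ck k UNIV (\<lambda>u. (1/2) * th (4*u+1) + (1/2) * th (2*u-1))"
    by (intro Ck_add Ck_cmult) auto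
  then show ?thesis unfolding w1_def[abs_def] by simp
qed

definition Wa :: "real \<Rightarrow> real" where "Wa = (SOME F. \<forall>x. (F has_real_derivative w1 x) (at x))"

lemma Wa_deriv: "(Wa has_real_derivative w1 x) (at x)"
proof -
  have "\<exists>F. \<forall>x. (F has_real_derivative w1 x) (at x)"
    by (rule global_antideriv) (rule Ck_cont[OF w1_Ck])
  then have "\<forall>x. (Wa has_real_derivative w1 x) (at x)" unfolding Wa_def by (rule someI_ex)
  then show ?thesis by blast
qed

definition w :: "real \<Rightarrow> real" where "w u = Wa u - Wa 1 + 1"

lemma w_deriv: "(w has_real_derivative w1 x) (at x)"
  unfolding w_def[abs_def] by (rule derivative_eq_intros Wa_deriv refl)+ simp

lemma w_Ck: "Ck k UNIV w"
proof (cases k)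
  case (Suc j)
  then show ?thesis using Ck_antideriv[of UNIV w w1 j] w1_Ck w_deriv by auto
qed simp

lemma w1_ge0: "w1 u \<ge> 0" using th_ge0 by (simp add: w1_def)
lemma w1_le1: "w1 u \<le> 1" using th_le1[of "4*u+1"] th_le1[of "2*u-1"] by (simp add: w1_def)
lemma w2_ge0: "w2 u \<ge> 0" using th1_nonneg by (simp add: w2_def add_nonneg_nonneg)
lemma w1_ge1: "u \<ge> 1 \<Longrightarrow> w1 u = 1" by (simp add: w1_def th_1)
lemma w1_half: "u \<ge> 0 \<Longrightarrow> w1 u \<ge> 1/2" using th_ge0[of "2*u-1"] by (simp add: w1_def th_1)
lemma w1_mid: "0 \<le> u \<Longrightarrow> u \<le> 1/2 \<Longrightarrow> w1 u = 1/2" by (simp add: w1_def th_1 th_0)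
lemma w1_neg: "u \<le> 0 \<Longrightarrow> w1 u \<le> 1/2" using th_le1[of "4*u+1"] by (simp add: w1_def th_0)
lemma w1_neg2: "u \<le> -1/4 \<Longrightarrow> w1 u = 0" by (simp add: w1_def th_0)

lemma w_1: "w 1 = 1" by (simp add: w_def)

lemma w_ge1: "u \<ge> 1 \<Longrightarrow> w u = u"
proof -
  assume u: "u \<ge> 1"
  have "(u - 1) * 1 \<le> w u - w 1" by (rule mvt_lower[OF u w_deriv]) (simp add: w1_ge1)
  moreover have "w u - w 1 \<le> (u - 1) * 1" by (rule mvt_upper[OF u w_deriv]) (simp add: w1_ge1)
  ultimately show ?thesis by (simp add: w_1)
qed

lemma w_ge_id: "w u \<ge> u"
proof (cases "u \<le> 1")
  case True
  have "w 1 - w u \<le> (1 - u) * 1" by (rule mvt_upper[OF True w_deriv]) (simp add: w1_le1)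
  then show ?thesis by (simp add: w_1)
qed (simp add: w_ge1)

lemma w_mono: "a \<le> b \<Longrightarrow> w a \<le> w b"
  using mvt_lower[of a b w w1 0] w_deriv w1_ge0 by simp

lemma w_pos: "w u \<ge> 1/8"
proof -
  have "w (1/2) - w 0 \<le> (1/2 - 0) * (1/2)" by (rule mvt_upper[OF _ w_deriv]) (simp_all add: w1_mid)
  with w_ge_id[of "1/2"] have w0: "w 0 \<ge> 1/4" by simp
  have "w 0 - w (-1/4) \<le> (0 - (-1/4)) * (1/2)" using w1_neg by (intro mvt_upper[OF _ w_deriv]) fastforce+
  with w0 have wq: "w (-1/4) \<ge> 1/8" by simp
  show ?thesis
  proof (cases "u \<ge> -1/4")
    case True then show ?thesis using w_mono[OF True] wq by simp
  next
    case False
    then have "u \<le> -1/4" by simp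
    have "w (-1/4) - w u \<le> (-1/4 - u) * 0" by (rule mvt_upper[OF \<open>u \<le> -1/4\<close> w_deriv]) (simp add: w1_neg2)
    then show ?thesis using wq by simp
  qed
qed



definition aa :: "real \<Rightarrow> real" where "aa n = n / (n - 1)"
definition KK :: "real \<Rightarrow> real" where "KK n = 4 * pi * (n - 1) / (n - 3)"
definition mu :: "real \<Rightarrow> real \<Rightarrow> real" where "mu n u = KK n * w u powr (- aa n)"
definition mu1 :: "real \<Rightarrow> real \<Rightarrow> real" where
  "mu1 n u = - aa n * KK n * w u powr (- aa n - 1) * w1 u"
definition mu2 :: "real \<Rightarrow> real \<Rightarrow> real" where
  "mu2 n u = aa n * KK n * (aa n + 1) * w u powr (- aa n - 2) * (w1 u)^2
     - aa n * KK n * w u powr (- aa n - 1) * w2 u"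
definition gg :: "real \<Rightarrow> real \<Rightarrow> real" where "gg n u = (3 * mu n u + 2 * u * mu1 n u) / (4 * pi)"
definition gg1 :: "real \<Rightarrow> real \<Rightarrow> real" where "gg1 n u = (5 * mu1 n u + 2 * u * mu2 n u) / (4 * pi)"

lemma w_gt0: "w u > 0" using w_pos[of u] by simp

lemma deriv_eqI: "(f has_real_derivative X) F \<Longrightarrow> X = Y \<Longrightarrow> (f has_real_derivative Y) F"
  by simp

lemma wpow_pos: "w u powr c > 0"
  using w_gt0[of u] by (metis powr_gt_zero less_irrefl)

lemma w_powr_deriv: "((\<lambda>u. w u powr c) has_real_derivative c * w u powr (c - 1) * w1 u) (at u)"
  using DERIV_fun_powr[OF w_deriv[of u] w_gt0[of u], of c] by simp

lemma mu_deriv: "(mu n has_real_derivative mu1 n u) (at u)"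
proof -
  have "((\<lambda>u. KK n * w u powr (- aa n)) has_real_derivative
      KK n * ((- aa n) * w u powr (- aa n - 1) * w1 u)) (at u)"
    by (rule DERIV_cmult[OF w_powr_deriv])
  then show ?thesis unfolding mu_def[abs_def] mu1_def by (rule deriv_eqI) (simp add: algebra_simps)
qed

lemma mu1_deriv: "(mu1 n has_real_derivative mu2 n u) (at u)"
proof -
  have "((\<lambda>u. - aa n * KK n * w u powr (- aa n - 1) * w1 u) has_real_derivative
      (- aa n * KK n * ((- aa n - 1) * w u powr (- aa n - 1 - 1) * w1 u)) * w1 u + w2 u * (- aa n * KK n * w u powr (- aa n - 1))) (at u)"
    by (rule DERIV_mult[OF DERIV_cmult[OF w_powr_deriv] w1_deriv])
  moreover have e: "w u powr (- aa n - 1 - 1) = w u powr (- aa n - 2)"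
    by (rule arg_cong[where f="\<lambda>c. w u powr c"]) simp
  ultimately have "((\<lambda>u. - aa n * KK n * w u powr (- aa n - 1) * w1 u) has_real_derivative
      (- aa n * KK n * ((- aa n - 1) * w u powr (- aa n - 2) * w1 u)) * w1 u + w2 u * (- aa n * KK n * w u powr (- aa n - 1))) (at u)"
    by simp
  then show ?thesis unfolding mu1_def[abs_def] mu2_def
    by (rule deriv_eqI) (simp add: algebra_simps power2_eq_square)
qed

lemma gg_deriv: "(gg n has_real_derivative gg1 n u) (at u)"
proof -
  have d2: "((\<lambda>u. 2 * u) has_real_derivative 2) (at u)"
    by (auto intro!: derivative_eq_intros)
  have "((\<lambda>u. (3 * mu n u + 2 * u * mu1 n u) / (4 * pi)) has_real_derivative
      (3 * mu1 n u + (2 * mu1 n u + mu2 n u * (2 * u))) / (4 * pi)) (at u)"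
    by (rule DERIV_cdivide[OF DERIV_add[OF DERIV_cmult[OF mu_deriv] DERIV_mult[OF d2 mu1_deriv]]])
  then show ?thesis unfolding gg_def[abs_def] gg1_def
    by (rule deriv_eqI) (simp add: algebra_simps)
qed

lemma wpowr_Ck: "Ck k UNIV (\<lambda>u. w u powr c)"
  by (rule Ck_comp[OF _ _ Ck_powr w_Ck]) (use w_gt0 in auto)

lemma mu_Ck: "Ck k UNIV (mu n)"
  unfolding mu_def[abs_def] by (intro Ck_cmult wpowr_Ck) auto

lemma mu1_Ck: "Ck k UNIV (mu1 n)"
  unfolding mu1_def[abs_def] by (intro Ck_cmult Ck_mult wpowr_Ck w1_Ck) auto

lemma gg_Ck: "Ck k UNIV (gg n)"
proof -
  have "Ck k UNIV (\<lambda>u. (1/(4*pi)) * (3 * mu n u + 2 * (u * mu1 n u)))"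
    by (intro Ck_cmult Ck_add Ck_mult mu_Ck mu1_Ck Ck_id) auto
  then show ?thesis by (rule Ck_cong') (auto simp: gg_def field_simps)
qed

lemma gg_Ck_deriv: "deriv (gg n) = gg1 n"
  using gg_deriv DERIV_imp_deriv by blast


lemma aa_bounds: "n > 3 \<Longrightarrow> 1 < aa n \<and> aa n < 3/2"
  by (simp add: aa_def field_simps)

lemma KK_pos: "n > 3 \<Longrightarrow> KK n > 0" by (simp add: KK_def)

lemma KK_aa: "n > 3 \<Longrightarrow> (3 - 2 * aa n) * KK n = 4 * pi"
proof -
  assume n: "n > 3"
  have e: "3 - 2 * aa n = (n - 3) / (n - 1)" using n by (simp add: aa_def field_simps)
  show ?thesis unfolding e KK_def using n by (simp add: divide_simps)
qed

lemma powr_shift: "(W::real) > 0 \<Longrightarrow> d = c + 1 \<Longrightarrow> W powr d = W powr c * W"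
  by (simp add: powr_add)

lemma powr_succ: "(W::real) > 0 \<Longrightarrow> W powr (c + 1) = W powr c * W"
  by (simp add: powr_add)

lemma mu_pos: "n > 3 \<Longrightarrow> mu n u > 0"
  using KK_pos wpow_pos by (simp add: mu_def)

lemma gg_factor:
  "gg n u * (4 * pi) = KK n * w u powr (- aa n - 2) * w u * (3 * w u - 2 * aa n * u * w1 u)"
proof -
  have e1: "w u powr (- aa n - 1) = w u powr (- aa n - 2) * w u"
    by (rule powr_shift[OF w_gt0]) simp
  have e2: "w u powr (- aa n) = w u powr (- aa n - 2) * w u * w u"
    using powr_shift[OF w_gt0[of u], of "- aa n" "- aa n - 1"] e1 by simp
  have "gg n u * (4 * pi) = 3 * mu n u + 2 * u * mu1 n u"
    unfolding gg_def using pi_gt_zero by simp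
  also have "\<dots> = KK n * w u powr (- aa n - 2) * w u * (3 * w u - 2 * aa n * u * w1 u)"
    unfolding mu_def mu1_def e1 e2 by (simp add: algebra_simps)
  finally show ?thesis .
qed

lemma gg1_factor:
  "gg1 n u * (4 * pi) = aa n * KK n * w u powr (- aa n - 2) *
     (- 5 * w u * w1 u + 2 * (aa n + 1) * u * (w1 u)^2 - 2 * u * w u * w2 u)"
proof -
  have e1: "w u powr (- aa n - 1) = w u powr (- aa n - 2) * w u"
    by (rule powr_shift[OF w_gt0]) simp
  have "gg1 n u * (4 * pi) = 5 * mu1 n u + 2 * u * mu2 n u"
    unfolding gg1_def using pi_gt_zero by simp
  also have "\<dots> = aa n * KK n * w u powr (- aa n - 2) *
     (- 5 * w u * w1 u + 2 * (aa n + 1) * u * (w1 u)^2 - 2 * u * w u * w2 u)"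
    unfolding mu1_def mu2_def e1 by (simp add: algebra_simps power2_eq_square)
  finally show ?thesis .
qed

lemma uw1_le: "u \<ge> 0 \<Longrightarrow> u * w1 u \<le> w u"
proof -
  assume u: "u \<ge> 0"
  have "u * w1 u \<le> u * 1" using u w1_le1 by (intro mult_left_mono) auto
  then show ?thesis using w_ge_id[of u] by simp
qed

lemma gg_pos: "n > 3 \<Longrightarrow> u \<ge> 0 \<Longrightarrow> gg n u > 0"
proof -
  assume n: "n > 3" and u: "u \<ge> 0"
  have "2 * aa n * (u * w1 u) \<le> 2 * aa n * w u"
    using uw1_le[OF u] aa_bounds[OF n] by (intro mult_left_mono) auto
  moreover have "2 * aa n * w u < 3 * w u" using aa_bounds[OF n] w_gt0[of u] by simp
  ultimately have "3 * w u - 2 * aa n * u * w1 u > 0" by (simp add: algebra_simps)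
  moreover have "KK n * w u powr (- aa n - 2) * w u > 0" using KK_pos[OF n] w_gt0[of u] by simp
  ultimately have "gg n u * (4 * pi) > 0" unfolding gg_factor by simp
  then show ?thesis by (simp add: zero_less_mult_iff)
qed

lemma gg1_neg: "n > 3 \<Longrightarrow> u \<ge> 0 \<Longrightarrow> gg1 n u < 0"
proof -
  assume n: "n > 3" and u: "u \<ge> 0"
  have A: "u * (w1 u)^2 \<le> w u * w1 u"
    using uw1_le[OF u] w1_ge0[of u] by (simp add: power2_eq_square mult.assoc[symmetric] mult_right_mono)
  have B: "2 * (aa n + 1) * (u * (w1 u)^2) \<le> 2 * (aa n + 1) * (w u * w1 u)"
    using A aa_bounds[OF n] by (intro mult_left_mono) auto
  have C: "u * w u * w2 u \<ge> 0" using u w_gt0[of u] w2_ge0[of u] by simp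
  have D: "w u * w1 u > 0" using w_gt0[of u] w1_half[OF u] by simp
  have E: "(2 * (aa n + 1) - 5) * (w u * w1 u) < 0"
    using D aa_bounds[OF n] by (intro mult_neg_pos) auto
  have "- 5 * (w u * w1 u) + 2 * (aa n + 1) * (w u * w1 u) = (2 * (aa n + 1) - 5) * (w u * w1 u)"
    by (simp add: algebra_simps)
  with E have "- 5 * (w u * w1 u) + 2 * (aa n + 1) * (w u * w1 u) < 0" by simp
  then have "- 5 * w u * w1 u + 2 * (aa n + 1) * u * (w1 u)^2 - 2 * u * w u * w2 u < 0"
    using B C by (simp add: algebra_simps)
  moreover have "aa n * KK n * w u powr (- aa n - 2) > 0"
    using KK_pos[OF n] aa_bounds[OF n] w_gt0[of u] by simp
  ultimately have "gg1 n u * (4 * pi) < 0" unfolding gg1_factor by (simp add: mult_pos_neg)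
  then show ?thesis by (simp add: mult_less_0_iff)
qed

lemma mu_ge1: "u \<ge> 1 \<Longrightarrow> mu n u = KK n * u powr (- aa n)"
  by (simp add: mu_def w_ge1)

lemma gg_ge1: "n > 3 \<Longrightarrow> u \<ge> 1 \<Longrightarrow> gg n u = u powr (- aa n)"
proof -
  assume n: "n > 3" and u: "u \<ge> 1"
  have "gg n u * (4 * pi) = KK n * u powr (- aa n - 2) * u * (3 * u - 2 * aa n * u)"
    unfolding gg_factor using u by (simp add: w_ge1 w1_ge1)
  also have "\<dots> = (3 - 2 * aa n) * KK n * (u powr (- aa n - 2) * u * u)" by (simp add: algebra_simps)
  also have "u powr (- aa n - 2) * u * u = u powr (- aa n)"
  proof -
    have "u powr (- aa n - 1) = u powr (- aa n - 2) * u" by (rule powr_shift) (use u in auto)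
    moreover have "u powr (- aa n) = u powr (- aa n - 1) * u" by (rule powr_shift) (use u in auto)
    ultimately show ?thesis by simp
  qed
  finally have "gg n u * (4 * pi) = 4 * pi * u powr (- aa n)" using KK_aa[OF n] by simp
  then show ?thesis using pi_gt_zero by simp
qed



definition hdn :: "real \<Rightarrow> real \<Rightarrow> real" where "hdn n u = - gg n u * mu n u / 2"

lemma hd_Ck: "Ck k UNIV (hdn n)"
proof -
  have "Ck k UNIV (\<lambda>u. (-1/2) * (gg n u * mu n u))"
    by (intro Ck_cmult Ck_mult gg_Ck mu_Ck) auto
  then show ?thesis unfolding hdn_def[abs_def] by (simp add: algebra_simps)
qed

definition Ha :: "real \<Rightarrow> real \<Rightarrow> real" where "Ha n = (SOME F. \<forall>x. (F has_real_derivative hdn n x) (at x))"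

lemma Ha_deriv: "(Ha n has_real_derivative hdn n x) (at x)"
proof -
  have "\<exists>F. \<forall>x. (F has_real_derivative hdn n x) (at x)"
    by (rule global_antideriv) (rule Ck_cont[OF hd_Ck])
  then have "\<forall>x. (Ha n has_real_derivative hdn n x) (at x)" unfolding Ha_def by (rule someI_ex)
  then show ?thesis by blast
qed

definition hh :: "real \<Rightarrow> real \<Rightarrow> real" where
  "hh n u = Ha n u - Ha n 1 + KK n / (2 * (2 * aa n - 1))"

lemma hh_deriv: "(hh n has_real_derivative hdn n x) (at x)"
  unfolding hh_def[abs_def] by (rule derivative_eq_intros Ha_deriv refl)+ simp

lemma hh_Ck: "Ck k UNIV (hh n)"
proof (cases k)
  case (Suc j)
  then show ?thesis using Ck_antideriv[of UNIV "hh n" "hdn n" j] hd_Ck hh_deriv by auto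
qed simp

lemma hh_ge1:
  assumes n: "n > 3" and u: "u \<ge> 1"
  shows "hh n u = KK n / (2 * (2 * aa n - 1)) * u powr (1 - 2 * aa n)"
proof -
  define C where "C = KK n / (2 * (2 * aa n - 1))"
  define Q where "Q x = hh n x - C * x powr (1 - 2 * aa n)" for x
  define Q' where "Q' x = hdn n x - C * ((1 - 2 * aa n) * x powr (1 - 2 * aa n - 1))" for x
  have dQ: "(Q has_real_derivative Q' x) (at x)" if "1 \<le> x" for x
    unfolding Q_def[abs_def] Q'_def
    by (intro DERIV_diff DERIV_cmult hh_deriv has_real_derivative_powr) (use that in auto)
  have Q'0: "Q' x = 0" if "1 \<le> x" "x \<le> u" for x
  proof -
    have x: "x > 0" using that by simp
    have "hdn n x = - KK n * (x powr (- aa n) * x powr (- aa n)) / 2"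
      unfolding hdn_def using that n by (simp add: gg_ge1 mu_ge1)
    also have "x powr (- aa n) * x powr (- aa n) = x powr (1 - 2 * aa n - 1)"
      by (simp add: powr_add[symmetric])
    finally have "hdn n x = - KK n * x powr (1 - 2 * aa n - 1) / 2" .
    moreover have "C * (1 - 2 * aa n) = - KK n / 2"
      unfolding C_def using aa_bounds[OF n] by (simp add: field_simps)
    moreover have "Q' x = hdn n x - (C * (1 - 2 * aa n)) * x powr (1 - 2 * aa n - 1)"
      unfolding Q'_def by (simp only: mult.assoc)
    ultimately show ?thesis by simp
  qed
  have "(u - 1) * 0 \<le> Q u - Q 1"
    by (rule mvt_lower'[OF u]) (use dQ Q'0 in auto)
  moreover have "Q u - Q 1 \<le> (u - 1) * 0"
    by (rule mvt_upper'[OF u]) (use dQ Q'0 in auto)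
  moreover have "Q 1 = 0" unfolding Q_def C_def hh_def by simp
  ultimately have "Q u = 0" by simp
  then show ?thesis unfolding Q_def C_def by simp
qed

lemma hd_neg: "n > 3 \<Longrightarrow> u \<ge> 0 \<Longrightarrow> hdn n u < 0"
  unfolding hdn_def using gg_pos mu_pos by (simp add: mult_pos_pos)

lemma hh_pos:
  assumes n: "n > 3" and u: "u \<ge> 0"
  shows "hh n u > 0"
proof -
  have h1: "hh n 1 > 0" using hh_ge1[OF n, of 1] KK_pos[OF n] aa_bounds[OF n] by simp
  show ?thesis
  proof (cases "u \<ge> 1")
    case True
    then show ?thesis using hh_ge1[OF n True] KK_pos[OF n] aa_bounds[OF n] by simp
  next
    case False
    then have "u \<le> 1" by simp
    have "hh n 1 - hh n u \<le> (1 - u) * 0"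
      by (rule mvt_upper'[OF \<open>u \<le> 1\<close>]) (use hh_deriv hd_neg[OF n] u in \<open>auto intro: less_imp_le\<close>)
    then show ?thesis using h1 by simp
  qed
qed



lemma gg_cont: "isCont (gg n) x"
  using gg_deriv DERIV_isCont by blast

lemma gg_strict: "n > 3 \<Longrightarrow> 0 \<le> u \<Longrightarrow> u < v \<Longrightarrow> gg n v < gg n u"
proof (rule DERIV_neg_imp_decreasing[where f="gg n"])
  fix x assume "n > 3" "0 \<le> u" "u \<le> x"
  then show "\<exists>y. (gg n has_real_derivative y) (at x) \<and> y < 0"
    using gg_deriv gg1_neg[of n x] by auto
qed

lemma gg_lim: "n > 3 \<Longrightarrow> (gg n \<longlongrightarrow> 0) at_top"
proof -
  assume n: "n > 3"
  have "((\<lambda>u. u powr (- aa n)) \<longlongrightarrow> 0) at_top"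
    using aa_bounds[OF n] by (intro tendsto_neg_powr filterlim_ident) auto
  moreover have "eventually (\<lambda>u. u powr (- aa n) = gg n u) at_top"
    using eventually_ge_at_top[of 1] by eventually_elim (use gg_ge1[OF n] in auto)
  ultimately show ?thesis by (rule Lim_transform_eventually)
qed

definition ginv :: "real \<Rightarrow> real \<Rightarrow> real" where "ginv n y = (THE u. u > 0 \<and> gg n u = y)"

lemma ginv_ex:
  assumes n: "n > 3" and y: "0 < y" "y < gg n 0"
  shows "\<exists>!u. u > 0 \<and> gg n u = y"
proof -
  have "eventually (\<lambda>u. gg n u < y) at_top"
    using gg_lim[OF n] y(1) by (auto simp: tendsto_iff dist_real_def dest!: spec[of _ y] elim: eventually_mono)
  then obtain U where U: "\<And>u. u \<ge> U \<Longrightarrow> gg n u < y" by (auto simp: eventually_at_top_linorder)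
  define V where "V = max U 1"
  have "gg n V < y" using U V_def by simp
  then obtain x where x: "0 \<le> x" "x \<le> V" "gg n x = y"
    using IVT2[of "gg n" V y 0] y V_def gg_cont by fastforce
  have "x \<noteq> 0" using x y by auto
  with x have ex: "x > 0 \<and> gg n x = y" by simp
  have "z = x" if "z > 0 \<and> gg n z = y" for z
  proof (rule ccontr)
    assume "z \<noteq> x"
    then have "z < x \<or> x < z" by auto
    then show False using gg_strict[OF n, of z x] gg_strict[OF n, of x z] that ex by auto
  qed
  then show ?thesis using ex by blast
qed

lemma ginv_prop: "n > 3 \<Longrightarrow> 0 < y \<Longrightarrow> y < gg n 0 \<Longrightarrow> ginv n y > 0 \<and> gg n (ginv n y) = y"
  unfolding ginv_def by (rule theI') (rule ginv_ex)

lemma gg_range: "n > 3 \<Longrightarrow> u > 0 \<Longrightarrow> 0 < gg n u \<and> gg n u < gg n 0"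
  using gg_pos gg_strict[of n 0 u] by auto

lemma ginv_gg: "n > 3 \<Longrightarrow> u > 0 \<Longrightarrow> ginv n (gg n u) = u"
  using ginv_ex[of n "gg n u"] gg_range[of n u] ginv_prop[of n "gg n u"] by blast

lemma ginv_deriv:
  assumes n: "n > 3" and y: "0 < y" "y < gg n 0"
  shows "(ginv n has_real_derivative inverse (gg1 n (ginv n y))) (at y)"
proof -
  define u where "u = ginv n y"
  have u: "u > 0" "gg n u = y" using ginv_prop[OF n y] u_def by auto
  have zpos: "z > 0" if "\<bar>z - u\<bar> \<le> u / 2" for z
    using that u(1) abs_le_D2[of "z - u" "u / 2"] by linarith
  have "isCont (ginv n) (gg n u)"
    by (rule isCont_inverse_function[where d="u/2"]) (use u zpos ginv_gg[OF n] gg_cont in auto)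
  then have c: "isCont (ginv n) y" using u by simp
  show ?thesis
    by (rule DERIV_inverse_function[where f="gg n" and a=0 and b="gg n 0"])
       (use gg_deriv gg1_neg[OF n, of u] u y c ginv_prop[OF n] u_def in auto)
qed

lemma ginv_Ck: "n > 3 \<Longrightarrow> Ck k {0<..<gg n 0} (ginv n)"
proof (induction k)
  case (Suc k)
  let ?S = "{0<..<gg n 0}"
  have c1: "Ck k UNIV (gg1 n)"
    using gg_Ck[of "Suc k" n] by (simp add: gg_Ck_deriv)
  have "Ck k ?S (\<lambda>y. gg1 n (ginv n y))"
    using Ck_comp[OF _ _ c1 Suc.IH[OF Suc.prems]] by auto
  then have "Ck k ?S (\<lambda>y. inverse (gg1 n (ginv n y)))"
  proof (rule Ck_inv[rotated])
    fix y assume "y \<in> ?S"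
    then have "ginv n y > 0" using ginv_prop[OF Suc.prems] by auto
    then show "gg1 n (ginv n y) \<noteq> 0" using gg1_neg[OF Suc.prems, of "ginv n y"] by auto
  qed auto
  then have "Ck k ?S (deriv (ginv n))"
    by (rule Ck_cong') (use ginv_deriv[OF Suc.prems] DERIV_imp_deriv in \<open>auto intro!: DERIV_imp_deriv[symmetric]\<close>)
  moreover have "\<forall>y\<in>?S. ginv n differentiable (at y)"
    using ginv_deriv[OF Suc.prems] by (auto simp: real_differentiable_def) blast
  ultimately show ?case by simp
qed simp

definition FF :: "real \<Rightarrow> real \<Rightarrow> real" where "FF n y = hh n (ginv n y)"

lemma FF_Ck: "n > 3 \<Longrightarrow> Ck k {0<..<gg n 0} (FF n)"
  unfolding FF_def[abs_def] by (rule Ck_comp[OF _ _ hh_Ck ginv_Ck]) auto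

lemma FF_deriv_pos:
  assumes n: "n > 3" and y: "0 < y" "y < gg n 0"
  shows "deriv (FF n) y > 0"
proof -
  have u: "ginv n y > 0" using ginv_prop[OF n y] by simp
  have "(FF n has_real_derivative hdn n (ginv n y) * inverse (gg1 n (ginv n y))) (at y)"
    unfolding FF_def[abs_def] by (rule DERIV_chain2[OF hh_deriv ginv_deriv[OF n y]])
  moreover have "hdn n (ginv n y) * inverse (gg1 n (ginv n y)) > 0"
    using hd_neg[OF n, of "ginv n y"] gg1_neg[OF n, of "ginv n y"] u
    by (simp add: mult_neg_neg)
  ultimately show ?thesis using DERIV_imp_deriv by metis
qed



lemma ftc_real:
  assumes "a \<le> b" "\<And>x. a \<le> x \<Longrightarrow> x \<le> b \<Longrightarrow> (f has_real_derivative f' x) (at x)"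
  shows "(f' has_integral (f b - f a)) {a..b}"
  by (rule fundamental_theorem_of_calculus[OF assms(1)])
     (use assms(2) in \<open>auto simp: has_real_derivative_iff_has_vector_derivative[symmetric] intro: has_field_derivative_at_within\<close>)

lemma sq_powr: "(r::real) > 0 \<Longrightarrow> (r^2) powr c = r powr (2 * c)"
proof -
  assume r: "r > 0"
  have "r powr (real 2) = r^2" by (rule powr_realpow[OF r])
  then have "r^2 = r powr 2" by simp
  then show ?thesis by (simp add: powr_powr)
qed

definition rhoF :: "real \<Rightarrow> real \<Rightarrow> real" where "rhoF n r = gg n (r^2)"
definition ppF :: "real \<Rightarrow> real \<Rightarrow> real" where "ppF n r = hh n (r^2)"

lemma mass_eq:
  assumes "s \<ge> 0"
  shows "mass (rhoF n) s = s^3 * mu n (s^2)"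
proof -
  have "((\<lambda>t. t^2 * rhoF n t) has_integral (s^3 * mu n (s^2) / (4*pi) - 0^3 * mu n (0^2) / (4*pi))) {0..s}"
  proof (rule ftc_real[OF assms])
    fix x :: real
    have dm: "((\<lambda>t. mu n (t^2)) has_real_derivative mu1 n (x^2) * (2*x)) (at x)"
      by (rule DERIV_chain2[OF mu_deriv]) (auto intro!: derivative_eq_intros)
    have d3: "((\<lambda>t. t^3) has_real_derivative 3 * x^2) (at x)"
      by (auto intro!: derivative_eq_intros)
    have "((\<lambda>t. t^3 * mu n (t^2) / (4*pi)) has_real_derivative
        (3 * x^2 * mu n (x^2) + mu1 n (x^2) * (2 * x) * x^3) / (4*pi)) (at x)"
      by (rule DERIV_cdivide[OF DERIV_mult[OF d3 dm]])
    moreover have "(3 * x^2 * mu n (x^2) + mu1 n (x^2) * (2 * x) * x^3) / (4*pi) = x^2 * rhoF n x"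
      unfolding rhoF_def gg_def by (simp add: power2_eq_square power3_eq_cube add_divide_distrib algebra_simps)
    ultimately show "((\<lambda>t. t^3 * mu n (t^2) / (4*pi)) has_real_derivative x^2 * rhoF n x) (at x)" by simp
  qed
  then have "integral {0..s} (\<lambda>t. t^2 * rhoF n t) = s^3 * mu n (s^2) / (4*pi)"
    by (simp add: integral_unique)
  then show ?thesis unfolding mass_def by simp
qed

lemma integrand_eq:
  assumes "s \<ge> 0"
  shows "mass (rhoF n) s * rhoF n s / s^2 = s * mu n (s^2) * gg n (s^2)"
proof (cases "s = 0")
  case False
  then show ?thesis using assms by (simp add: mass_eq rhoF_def power2_eq_square power3_eq_cube field_simps)
qed simp

lemma pp_deriv: "(ppF n has_real_derivative hdn n (r^2) * (2 * r)) (at r)"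
  unfolding ppF_def[abs_def] by (rule DERIV_chain2[OF hh_deriv]) (auto intro!: derivative_eq_intros)

lemma pp_ge1: "n > 3 \<Longrightarrow> r \<ge> 1 \<Longrightarrow> ppF n r = KK n / (2 * (2 * aa n - 1)) * r powr (2 * (1 - 2 * aa n))"
  unfolding ppF_def using hh_ge1[of n "r^2"] sq_powr[of r] by (simp add: one_le_power)

lemma pp_lim: "n > 3 \<Longrightarrow> (ppF n \<longlongrightarrow> 0) at_top"
proof -
  assume n: "n > 3"
  have "((\<lambda>r. KK n / (2 * (2 * aa n - 1)) * r powr (2 * (1 - 2 * aa n))) \<longlongrightarrow> KK n / (2 * (2 * aa n - 1)) * 0) at_top"
    using aa_bounds[OF n] by (intro tendsto_mult tendsto_const tendsto_neg_powr filterlim_ident) auto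
  moreover have "eventually (\<lambda>r. KK n / (2 * (2 * aa n - 1)) * r powr (2 * (1 - 2 * aa n)) = ppF n r) at_top"
    using eventually_ge_at_top[of 1] by eventually_elim (use pp_ge1[OF n] in auto)
  ultimately show ?thesis by (simp add: Lim_transform_eventually)
qed

lemma pp_integral:
  assumes n: "n > 3" and r: "r \<ge> 0"
  shows "((\<lambda>s. mass (rhoF n) s * rhoF n s / s^2) has_integral ppF n r) {r..}"
proof -
  let ?f = "\<lambda>s. mass (rhoF n) s * rhoF n s / s^2"
  have fi: "(?f has_integral (ppF n r - ppF n y)) {r..y}" if "r \<le> y" for y
  proof -
    have "((\<lambda>s. s * mu n (s^2) * gg n (s^2)) has_integral ((- ppF n y) - (- ppF n r))) {r..y}"
    proof (rule ftc_real[OF that])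
      fix x
      have "((\<lambda>t. - ppF n t) has_real_derivative - (hdn n (x^2) * (2 * x))) (at x)"
        by (intro DERIV_minus pp_deriv)
      moreover have "- (hdn n (x^2) * (2 * x)) = x * mu n (x^2) * gg n (x^2)"
        unfolding hdn_def by simp
      ultimately show "((\<lambda>t. - ppF n t) has_real_derivative x * mu n (x^2) * gg n (x^2)) (at x)" by simp
    qed
    then have "((\<lambda>s. s * mu n (s^2) * gg n (s^2)) has_integral (ppF n r - ppF n y)) {r..y}" by simp
    then show ?thesis
      by (subst has_integral_cong[where g="\<lambda>s. s * mu n (s^2) * gg n (s^2)"]) (use r integrand_eq in auto)
  qed
  show ?thesis
  proof (rule has_integral_to_inf)
    fix y :: real
    show "?f integrable_on {r..y}"
      using fi[of y] by (cases "r \<le> y") (auto simp: integrable_on_def)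
  next
    have "((\<lambda>y. ppF n r - ppF n y) \<longlongrightarrow> ppF n r - 0) at_top"
      by (intro tendsto_diff tendsto_const pp_lim[OF n])
    moreover have "eventually (\<lambda>y. ppF n r - ppF n y = integral {r..y} ?f) at_top"
      using eventually_ge_at_top[of r] by eventually_elim (rule integral_unique[OF fi, symmetric])
    ultimately show "((\<lambda>y. integral {r..y} ?f) \<longlongrightarrow> ppF n r) at_top"
      by (simp add: Lim_transform_eventually)
  next
    fix y assume "y \<ge> r"
    then have "y \<ge> 0" using r by simp
    have "0 \<le> y * mu n (y^2) * gg n (y^2)"
      using \<open>y \<ge> 0\<close> mu_pos[OF n, of "y^2"] gg_pos[OF n, of "y^2"] by (intro mult_nonneg_nonneg) auto
    then show "?f y \<ge> 0"
      using integrand_eq[OF \<open>y \<ge> 0\<close>, of n] by simp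
  qed
qed

lemma powr_at_top_pos: "(c::real) > 0 \<Longrightarrow> filterlim (\<lambda>x. x powr c) at_top at_top"
proof -
  assume c: "c > 0"
  have L: "filterlim (\<lambda>x. exp (c * ln x)) at_top at_top"
    by (rule filterlim_compose[OF exp_at_top filterlim_tendsto_pos_mult_at_top[OF tendsto_const c ln_at_top]])
  have ev: "eventually (\<lambda>x. exp (c * ln x) = x powr c) at_top"
    using eventually_gt_at_top[of 0] by eventually_elim (simp add: powr_def)
  have "filterlim (\<lambda>x. exp (c * ln x)) at_top at_top = filterlim (\<lambda>x. x powr c) at_top at_top"
    by (rule filterlim_cong[OF refl refl ev])
  with L show ?thesis by simp
qed



theorem mainTheorem6:
  fixes n :: real
  assumes "n > 3"
  shows "\<exists>rho p :: real \<Rightarrow> real.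
     (\<forall>r\<ge>0. rho r > 0 \<and> p r > 0) \<and>
     (\<exists>g h. smooth_on UNIV g \<and> smooth_on UNIV h \<and>
            (\<forall>r. rho r = g (r^2) \<and> p r = h (r^2))) \<and>
     (\<forall>r>0. deriv rho r < 0) \<and> deriv (deriv rho) 0 < 0 \<and>
     (\<forall>r>1. rho r = r powr (- 2 * n / (n - 1))) \<and>
     (\<forall>r\<ge>0. ((\<lambda>s. mass rho s * rho s / s^2) has_integral p r) {r..}) \<and>
     (\<forall>r>0. (p has_real_derivative (- rho r * mass rho r / r^2)) (at r)) \<and>
     (\<exists>F. smooth_on {0<..<rho 0} F \<and> (\<forall>x\<in>{0<..<rho 0}. deriv F x > 0) \<and>
          (\<forall>r>0. p r = F (rho r)) \<and>
          (\<forall>x. 0 < x \<and> x < rho 1 \<longrightarrow>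
               F x = 4 * pi * (n - 1)^2 / (2 * (n + 1) * (n - 3)) * x powr ((n + 1) / n))) \<and>
     (\<forall>r>1. mass rho r = 4 * pi * (n - 1) / (n - 3) * r powr ((n - 3) / (n - 1))) \<and>
     filterlim (mass rho) at_top at_top"
proof -
  note n = assms
  have rho0: "rhoF n 0 = gg n 0" by (simp add: rhoF_def)
  have rho1: "rhoF n 1 = 1" using gg_ge1[OF n, of 1] by (simp add: rhoF_def)
  have drho: "(rhoF n has_real_derivative gg1 n (r^2) * (2 * r)) (at r)" for r
    unfolding rhoF_def[abs_def] by (rule DERIV_chain2[OF gg_deriv]) (auto intro!: derivative_eq_intros)
  have drho_eq: "deriv (rhoF n) = (\<lambda>r. gg1 n (r^2) * (2 * r))"
    using drho DERIV_imp_deriv by blast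
  have P1: "\<forall>r\<ge>0. rhoF n r > 0 \<and> ppF n r > 0"
    using gg_pos[OF n] hh_pos[OF n] by (simp add: rhoF_def ppF_def)
  have P2: "\<exists>g h. smooth_on UNIV g \<and> smooth_on UNIV h \<and> (\<forall>r. rhoF n r = g (r^2) \<and> ppF n r = h (r^2))"
    by (rule exI[of _ "gg n"], rule exI[of _ "hh n"])
       (auto intro!: Ck_smooth gg_Ck hh_Ck simp: rhoF_def ppF_def)
  have P3: "\<forall>r>0. deriv (rhoF n) r < 0"
    using gg1_neg[OF n] by (simp add: drho_eq mult_neg_pos)
  have P4: "deriv (deriv (rhoF n)) 0 < 0"
  proof -
    have "Ck 1 UNIV (gg1 n)" using gg_Ck[of 2 n] by (simp add: gg_Ck_deriv numeral_2_eq_2)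
    then obtain D where D: "(gg1 n has_real_derivative D) (at 0)"
      by (auto simp: real_differentiable_def)
    have D': "(gg1 n has_real_derivative D) (at ((0::real)^2))" using D by simp
    have d1: "((\<lambda>r. gg1 n (r^2)) has_real_derivative D * (2 * 0)) (at 0)"
      by (rule DERIV_chain2[where f="gg1 n" and g="\<lambda>r. r^2", OF D']) (auto intro!: derivative_eq_intros)
    have d2: "((\<lambda>r. 2 * r) has_real_derivative 2) (at (0::real))"
      by (auto intro!: derivative_eq_intros)
    have "((\<lambda>r. gg1 n (r^2) * (2 * r)) has_real_derivative (D * (2 * 0)) * (2 * 0) + 2 * gg1 n (0^2)) (at 0)"
      by (rule DERIV_mult[OF d1 d2])
    then have "deriv (deriv (rhoF n)) 0 = 2 * gg1 n 0"
      unfolding drho_eq by (simp add: DERIV_imp_deriv)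
    then show ?thesis using gg1_neg[OF n, of 0] by simp
  qed
  have P5: "\<forall>r>1. rhoF n r = r powr (- 2 * n / (n - 1))"
  proof (intro allI impI)
    fix r :: real assume r: "r > 1"
    have "rhoF n r = r powr (2 * (- aa n))"
      unfolding rhoF_def using gg_ge1[OF n, of "r^2"] sq_powr[of r] r by (simp add: one_le_power)
    also have "2 * (- aa n) = - 2 * n / (n - 1)" by (simp add: aa_def)
    finally show "rhoF n r = r powr (- 2 * n / (n - 1))" .
  qed
  have P6: "\<forall>r\<ge>0. ((\<lambda>s. mass (rhoF n) s * rhoF n s / s^2) has_integral ppF n r) {r..}"
    using pp_integral[OF n] by blast
  have P7: "\<forall>r>0. (ppF n has_real_derivative (- rhoF n r * mass (rhoF n) r / r^2)) (at r)"
  proof (intro allI impI)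
    fix r :: real assume r: "r > 0"
    have "hdn n (r^2) * (2 * r) = - rhoF n r * mass (rhoF n) r / r^2"
      using r by (simp add: hdn_def rhoF_def mass_eq power2_eq_square power3_eq_cube field_simps)
    then show "(ppF n has_real_derivative (- rhoF n r * mass (rhoF n) r / r^2)) (at r)"
      using pp_deriv[of n r] by simp
  qed
  have P8: "\<exists>F. smooth_on {0<..<rhoF n 0} F \<and> (\<forall>x\<in>{0<..<rhoF n 0}. deriv F x > 0) \<and>
          (\<forall>r>0. ppF n r = F (rhoF n r)) \<and>
          (\<forall>x. 0 < x \<and> x < rhoF n 1 \<longrightarrow>
               F x = 4 * pi * (n - 1)^2 / (2 * (n + 1) * (n - 3)) * x powr ((n + 1) / n))"
  proof (rule exI[of _ "FF n"], intro conjI ballI allI impI)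
    show "smooth_on {0<..<rhoF n 0} (FF n)" unfolding rho0 by (intro Ck_smooth FF_Ck n)
  next
    fix x assume "x \<in> {0<..<rhoF n 0}"
    then show "deriv (FF n) x > 0" using FF_deriv_pos[OF n] rho0 by auto
  next
    fix r :: real assume "r > 0"
    then show "ppF n r = FF n (rhoF n r)" by (simp add: FF_def rhoF_def ppF_def ginv_gg[OF n])
  next
    fix x assume x: "0 < x \<and> x < rhoF n 1"
    have g10: "gg n 1 < gg n 0" using gg_strict[OF n, of 0 1] by simp
    have xr: "0 < x" "x < gg n 0" using x rho1 g10 gg_ge1[OF n, of 1] by auto
    define u where "u = ginv n x"
    have u: "u > 0" "gg n u = x" using ginv_prop[OF n xr] u_def by auto
    have u1: "u > 1"
    proof (rule ccontr)
      assume "\<not> u > 1"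
      then have "gg n 1 \<le> gg n u" using gg_strict[OF n, of u 1] u by (cases "u = 1") auto
      then show False using u x rho1 gg_ge1[OF n, of 1] by simp
    qed
    have xu: "x = u powr (- aa n)" using gg_ge1[OF n, of u] u u1 by simp
    have "x powr ((n + 1) / n) = u powr (- aa n * ((n + 1) / n))" by (simp add: xu powr_powr)
    also have "- aa n * ((n + 1) / n) = 1 - 2 * aa n" using n by (simp add: aa_def field_simps)
    finally have xp: "x powr ((n + 1) / n) = u powr (1 - 2 * aa n)" .
    have C: "KK n / (2 * (2 * aa n - 1)) = 4 * pi * (n - 1)^2 / (2 * (n + 1) * (n - 3))"
      using n by (simp add: KK_def aa_def field_simps power2_eq_square)
    show "FF n x = 4 * pi * (n - 1)^2 / (2 * (n + 1) * (n - 3)) * x powr ((n + 1) / n)"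
      unfolding FF_def u_def[symmetric] hh_ge1[OF n less_imp_le[OF u1]] xp C ..
  qed
  have massr: "mass (rhoF n) r = KK n * r powr ((n - 3) / (n - 1))" if r: "r > 1" for r
  proof -
    have "mass (rhoF n) r = r^3 * (KK n * r powr (2 * (- aa n)))"
      using r mass_eq[of r n] mu_ge1[of "r^2" n] sq_powr[of r] by (simp add: one_le_power)
    also have "r^3 = r powr 3" using r by (simp add: powr_realpow)
    also have "r powr 3 * (KK n * r powr (2 * (- aa n))) = KK n * r powr (3 + 2 * (- aa n))"
      by (metis powr_add mult.left_commute)
    also have "3 + 2 * (- aa n) = (n - 3) / (n - 1)" using n by (simp add: aa_def field_simps)
    finally show ?thesis .
  qed
  have P9: "\<forall>r>1. mass (rhoF n) r = 4 * pi * (n - 1) / (n - 3) * r powr ((n - 3) / (n - 1))"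
    using massr by (simp add: KK_def)
  have P10: "filterlim (mass (rhoF n)) at_top at_top"
  proof -
    have "filterlim (\<lambda>r. KK n * r powr ((n - 3) / (n - 1))) at_top at_top"
      by (rule filterlim_tendsto_pos_mult_at_top[OF tendsto_const KK_pos[OF n] powr_at_top_pos]) (use n in simp)
    moreover have ev: "eventually (\<lambda>r. KK n * r powr ((n - 3) / (n - 1)) = mass (rhoF n) r) at_top"
      using eventually_gt_at_top[of 1] by eventually_elim (simp add: massr)
    moreover have "filterlim (\<lambda>r. KK n * r powr ((n - 3) / (n - 1))) at_top at_top = filterlim (mass (rhoF n)) at_top at_top"
      by (rule filterlim_cong[OF refl refl ev])
    ultimately show ?thesis by simp
  qed
  show ?thesis
    by (rule exI[of _ "rhoF n"], rule exI[of _ "ppF n"]) (intro conjI P1 P2 P3 P4 P5 P6 P7 P8 P9 P10)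
qed

end
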